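(* Let $P>0$, $v\ge2$, and let $\Gamma'_{T_1},\Gamma'_{T_2},\Gamma'_R,\Gamma''_{T_1},\Gamma''_{T_2}\ge0$ with $\Gamma'_{T_1}=\Gamma'_{T_2}$ and $\Gamma''_{T_1}=\Gamma''_{T_2}$. Set $B_i=\Gamma''_{T_i}+2\Gamma'_{T_i}+1$ and $C_i=(\Gamma'_R+1)(\Gamma'_{T_i}+1)$ for $i=1,2$. For $(\omega,D)\in(0,1)^2$ let $\bar\gamma_1=P(1-D)^{-v}$, $\bar\gamma_2=PD^{-v}$ and $$\mathcal L(\omega,D)=\frac{B_2-B_1}{\bar\gamma_2}+\frac{B_1+C_1}{\omega\bar\gamma_2}+\frac{B_1-B_2}{\bar\gamma_1}+\frac{B_2+C_2}{(1-\omega)\bar\gamma_1}.$$ Then $(\omega,D)=(1/2,1/2)$ is a global minimizer of $\mathcal L$ over $(0,1)^2$.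
   Context: $\mathcal L$ is (up to a positive factor) the high-SNR asymptotic protocol outage probability of a three-phase two-way relay network as a function of the relay power-allocation coefficient $\omega$ and relay position $D$ (the relay lies on the segment between terminals at normalized distance $1$, at distance $1-D$ from $T_1$ and $D$ from $T_2$); $v$ is the path-loss exponent and $\Gamma'_N,\Gamma''_N$ are the first and second moments of the interference power at node $N$. *)

theory Defs
  imports Complex_Main
begin

text \<open>High-SNR asymptotic outage objective. Parameters: P, v, G1' G2' (first moments at T1,T2),
  GR' (first moment at R), G1'' G2'' (second moments at T1,T2).\<close>

definition outage_L ::
  "real \<Rightarrow> real \<Rightarrow> real \<Rightarrow> real \<Rightarrow> real \<Rightarrow> real \<Rightarrow> real \<Rightarrow> real \<Rightarrow> real \<Rightarrow> real" where
  "outage_L P v G1' G2' GR' G1'' G2'' \<omega> D =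
    (let B1 = G1'' + 2 * G1' + 1;
         B2 = G2'' + 2 * G2' + 1;
         C1 = (GR' + 1) * (G1' + 1);
         C2 = (GR' + 1) * (G2' + 1);
         g1 = P * (1 - D) powr (- v);
         g2 = P * D powr (- v)
     in (B2 - B1) / g2 + (B1 + C1) / (\<omega> * g2) + (B1 - B2) / g1 + (B2 + C2) / ((1 - \<omega>) * g1))"

end

theory Submission
  imports Defs "HOL-Analysis.Analysis"
begin

lemma cs_aux:
  fixes a b w :: real
  assumes "0 < w" "w < 1"
  shows "(a+b)^2 \<le> a^2/w + b^2/(1-w)"
proof -
  have "a^2/w + b^2/(1-w) - (a+b)^2 = (a*(1-w) - b*w)^2/(w*(1-w))"
    using assms by (simp add: field_simps power2_eq_square)
  moreover have "(a*(1-w) - b*w)^2/(w*(1-w)) \<ge> 0" using assms by simp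
  ultimately show ?thesis by linarith
qed

lemma sq_powr:
  fixes D p :: real assumes "D > 0"
  shows "D powr (-(2*p)) = 1 / (D powr p)^2"
proof -
  have "D powr (2*p) = (D powr p)^2"
    by (simp add: power2_eq_square powr_add[symmetric])
  thus ?thesis by (simp add: powr_minus divide_inverse)
qed

theorem corollary1:
  fixes P v G1' G2' GR' G1'' G2'' :: real
  assumes "P > 0" and "v \<ge> 2"
    and "G1' \<ge> 0" and "G2' \<ge> 0" and "GR' \<ge> 0" and "G1'' \<ge> 0" and "G2'' \<ge> 0"
    and "G1' = G2'" and "G1'' = G2''"
  shows "\<forall>\<omega> D. 0 < \<omega> \<and> \<omega> < 1 \<and> 0 < D \<and> D < 1 \<longrightarrow>
           outage_L P v G1' G2' GR' G1'' G2'' (1/2) (1/2) \<le> outage_L P v G1' G2' GR' G1'' G2'' \<omega> D"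
proof (intro allI impI)
  fix w D :: real
  assume h: "0 < w \<and> w < 1 \<and> 0 < D \<and> D < 1"
  define p where "p = v/2"
  have p1: "p \<ge> 1" using assms(2) p_def by simp
  have vp: "v = 2*p" using p_def by simp
  define K where "K = G1'' + 2 * G1' + 1 + (GR' + 1) * (G1' + 1)"
  have K0: "K \<ge> 0" using assms unfolding K_def by simp
  define a where "a = D powr p"
  define b where "b = (1-D) powr p"
  define c where "c = (1/2::real) powr p"
  have gen: "outage_L P v G1' G2' GR' G1'' G2'' w' D' = K / P * ((D' powr p)^2/w' + ((1-D') powr p)^2/(1-w'))"
    if "0 < D'" "D' < 1" "0<w'" "w'<1" for w' D'
  proof -
    have e1: "D' powr (-v) = 1/(D' powr p)^2" using sq_powr[of D' p] that vp by simp
    have e2: "(1-D') powr (-v) = 1/((1-D') powr p)^2" using sq_powr[of "1-D'" p] that vp by simp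
    have pos1: "D' powr p > 0" "(1-D') powr p > 0" using that by auto
    show ?thesis unfolding outage_L_def Let_def e1 e2 K_def using assms(1,8,9) that pos1
      by (simp add: field_simps)
  qed
  have L1: "outage_L P v G1' G2' GR' G1'' G2'' w D = K/P * (a^2/w + b^2/(1-w))"
    using gen[of D w] h a_def b_def by simp
  have L0: "outage_L P v G1' G2' GR' G1'' G2'' (1/2) (1/2) = K/P * (4*c^2)"
    using gen[of "1/2" "1/2"] c_def by simp
  have conv: "c \<le> (a+b)/2"
  proof -
    have "((1 - 1/2) *\<^sub>R D + (1/2) *\<^sub>R (1-D)) powr p \<le> (1 - 1/2) * D powr p + (1/2) * (1-D) powr p"
      using convex_onD[OF powr_convex[OF p1], of "1/2" D "1-D"] h by simp
    moreover have "D / 2 + (1 - D) / 2 = (1/2::real)" by (simp add: field_simps)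
    ultimately show ?thesis unfolding a_def b_def c_def by simp
  qed
  have c0: "c \<ge> 0" unfolding c_def by simp
  have "4*c^2 \<le> (a+b)^2"
  proof -
    have "2*c \<le> a+b" using conv by simp
    hence "(2*c)^2 \<le> (a+b)^2" using c0 by (intro power_mono) auto
    thus ?thesis by (simp add: power_mult_distrib)
  qed
  also have "\<dots> \<le> a^2/w + b^2/(1-w)" using cs_aux h by simp
  finally have "4*c^2 \<le> a^2/w + b^2/(1-w)" .
  moreover have "K/P \<ge> 0" using K0 assms(1) by simp
  ultimately show "outage_L P v G1' G2' GR' G1'' G2'' (1/2) (1/2) \<le> outage_L P v G1' G2' GR' G1'' G2'' w D"
    unfolding L0 L1 by (metis mult_left_mono)
qed

end
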